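(* Let $P$ and $S$ be strings over a totally ordered alphabet and let $q\ge 0$ be an integer such that both $P$ and $S$ have length at least $q+1$. Assume that $\mathcal{PP}_P(i)=\mathcal{PP}_S(i)$ for all $1\le i\le q$, i.e. $P[1..q]$ and $S[1..q]$ have the same prefix-parent representations. Then $P[1..q+1]$ and $S[1..q+1]$ have the same prefix-parent representations (i.e. additionally $\mathcal{PP}_P(q+1)=\mathcal{PP}_S(q+1)$) if and only if $$S[\mathcal{PP}_P(q+1)] \preceq S[q+1] \preceq S[\mathcal{PC}_P(q+1)].$$
   Context: A string $S$ is a finite sequence $S[1],S[2],\dots$ over an alphabet $\Sigma$ with a total order $<$; $S[i..j]$ denotes the substring $S[i]S[i+1]\cdots S[j]$ (empty if $i>j$). For positions $i,j$ of $S$, write $S[i]\prec S[j]$ iff either $S[i]<S[j]$, or $S[i]$ and $S[j]$ have the same value and $i<j$; write $S[i]\preceq S[j]$ iff $S[i]\prec S[j]$ or $i=j$. Minimum elements are taken with respect to $\prec$ (so among equal minimal values the leftmost position is the minimum). Prefix-parent representation: $\mathcal{PP}_S(i)=\max\{j: 1\le j<i,\ S[j]\prec S[i]\}$ if such $j$ exists, and $\mathcal{PP}_S(i)=i$ otherwise. Prefix-child representation: $\mathcal{PC}_S(1)=1$, and for $i\ge 2$: if $\mathcal{PP}_S(i)=i$, then $\mathcal{PC}_S(i)$ is the index $j\in[1,i-1]$ such that $S[j]$ is the minimum of $S[1..i-1]$; if $\mathcal{PP}_S(i)=i-1$, then $\mathcal{PC}_S(i)=i$; if $\mathcal{PP}_S(i)<i-1$,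 then $\mathcal{PC}_S(i)$ is the index $j$ with $\mathcal{PP}_S(i)<j<i$ such that $S[j]$ is the minimum of $S[\mathcal{PP}_S(i)+1..i-1]$. *)

theory Defs
  imports Main
begin

text \<open>Strings are lists over a linearly ordered alphabet, accessed 1-based:
  position i of S is S ! (i - 1).\<close>

definition at :: "'a list \<Rightarrow> nat \<Rightarrow> 'a" where
  "at S i = S ! (i - 1)"

definition prec :: "'a::linorder list \<Rightarrow> nat \<Rightarrow> nat \<Rightarrow> bool" where
  "prec S i j \<longleftrightarrow> at S i < at S j \<or> (at S i = at S j \<and> i < j)"

definition preceq :: "'a::linorder list \<Rightarrow> nat \<Rightarrow> nat \<Rightarrow> bool" where
  "preceq S i j \<longleftrightarrow> prec S i j \<or> i = j"

definition PP :: "'a::linorder list \<Rightarrow> nat \<Rightarrow> nat" where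
  "PP S i = (if \<exists>j. 1 \<le> j \<and> j < i \<and> prec S j i
             then Max {j. 1 \<le> j \<and> j < i \<and> prec S j i} else i)"

definition minpos :: "'a::linorder list \<Rightarrow> nat \<Rightarrow> nat \<Rightarrow> nat" where
  "minpos S a b = (THE j. a \<le> j \<and> j \<le> b \<and> (\<forall>k. a \<le> k \<and> k \<le> b \<longrightarrow> preceq S j k))"

definition PC :: "'a::linorder list \<Rightarrow> nat \<Rightarrow> nat" where
  "PC S i = (if i = 1 then 1
             else if PP S i = i then minpos S 1 (i - 1)
             else if PP S i = i - 1 then i
             else minpos S (PP S i + 1) (i - 1))"

end

theory Submission
  imports Defs
begin

lemma prec_lt: "j < i \<Longrightarrow> prec S j i \<longleftrightarrow> at S j \<le> at S i"
  by (auto simp: prec_def)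

lemma preceq_gt: "j < i \<Longrightarrow> preceq S i j \<longleftrightarrow> at S i < at S j"
  by (auto simp: preceq_def prec_def)

lemma PP_take: "i \<le> n \<Longrightarrow> PP (take n S) i = PP S i"
proof -
  assume i: "i \<le> n"
  have "\<And>j. 1 \<le> j \<Longrightarrow> j < i \<Longrightarrow> prec (take n S) j i = prec S j i"
    using i by (auto simp: prec_def at_def)
  then have e: "{j. 1 \<le> j \<and> j < i \<and> prec (take n S) j i} = {j. 1 \<le> j \<and> j < i \<and> prec S j i}"
    by blast
  have ex: "(\<exists>j. 1 \<le> j \<and> j < i \<and> prec (take n S) j i) = (\<exists>j. 1 \<le> j \<and> j < i \<and> prec S j i)"
    using e by blast
  show ?thesis unfolding PP_def e ex by (rule refl)
qed

lemma PP_le: "PP S i \<le> i"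
proof -
  have f: "finite {j. 1 \<le> j \<and> j < i \<and> prec S j i}" by (rule finite_subset[of _ "{..<i}"]) auto
  show ?thesis
  proof (cases "\<exists>j. 1 \<le> j \<and> j < i \<and> prec S j i")
    case True
    then have "Max {j. 1 \<le> j \<and> j < i \<and> prec S j i} \<in> {j. 1 \<le> j \<and> j < i \<and> prec S j i}"
      using f by (intro Max_in) auto
    then show ?thesis using True unfolding PP_def by simp
  next
    case False show ?thesis unfolding PP_def if_not_P[OF False] by simp
  qed
qed

lemma PP_lt:
  assumes "PP S i < i"
  shows "1 \<le> PP S i \<and> at S (PP S i) \<le> at S i \<and> (\<forall>j. PP S i < j \<and> j < i \<longrightarrow> at S i < at S j)"
proof -
  let ?X = "{j. 1 \<le> j \<and> j < i \<and> prec S j i}"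
  have f: "finite ?X" by (rule finite_subset[of _ "{..<i}"]) auto
  have ne: "\<exists>j. 1 \<le> j \<and> j < i \<and> prec S j i"
    using assms unfolding PP_def by (auto split: if_splits)
  then have eq: "PP S i = Max ?X" unfolding PP_def by simp
  have "Max ?X \<in> ?X" using f ne by (intro Max_in) auto
  then have m: "1 \<le> PP S i \<and> PP S i < i \<and> at S (PP S i) \<le> at S i"
    using eq prec_lt by auto
  have "\<forall>j. PP S i < j \<and> j < i \<longrightarrow> at S i < at S j"
  proof (intro allI impI)
    fix j assume j: "PP S i < j \<and> j < i"
    show "at S i < at S j"
    proof (rule ccontr)
      assume "\<not> at S i < at S j"
      then have "j \<in> ?X" using j m prec_lt[of j i S] by auto
      then have "j \<le> Max ?X" using f by auto
      then show False using j eq by simp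
    qed
  qed
  then show ?thesis using m by blast
qed

lemma PP_self_iff: "PP S i = i \<longleftrightarrow> (\<forall>j. 1 \<le> j \<and> j < i \<longrightarrow> at S i < at S j)"
proof
  assume h: "PP S i = i"
  show "\<forall>j. 1 \<le> j \<and> j < i \<longrightarrow> at S i < at S j"
  proof (intro allI impI, rule ccontr)
    fix j assume j: "1 \<le> j \<and> j < i" and "\<not> at S i < at S j"
    then have ex: "\<exists>j. 1 \<le> j \<and> j < i \<and> prec S j i" using prec_lt[of j i S] by auto
    let ?X = "{j. 1 \<le> j \<and> j < i \<and> prec S j i}"
    have f: "finite ?X" by (rule finite_subset[of _ "{..<i}"]) auto
    have "Max ?X \<in> ?X" using f ex by (intro Max_in) auto
    then have "Max ?X < i" by auto
    then show False using h ex unfolding PP_def by simp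
  qed
next
  assume h: "\<forall>j. 1 \<le> j \<and> j < i \<longrightarrow> at S i < at S j"
  have NE: "\<not> (\<exists>j. 1 \<le> j \<and> j < i \<and> prec S j i)"
  proof
    assume "\<exists>j. 1 \<le> j \<and> j < i \<and> prec S j i"
    then obtain j where j: "1 \<le> j" "j < i" "prec S j i" by blast
    then have "at S j \<le> at S i" using prec_lt[of j i S] by simp
    then show False using h j by (meson leD)
  qed
  show "PP S i = i" unfolding PP_def if_not_P[OF NE] by (rule refl)
qed

lemma PP_eq_iff:
  assumes "1 \<le> p" "p < i"
  shows "PP S i = p \<longleftrightarrow> at S p \<le> at S i \<and> (\<forall>j. p < j \<and> j < i \<longrightarrow> at S i < at S j)"
proof
  assume "PP S i = p" then show "at S p \<le> at S i \<and> (\<forall>j. p < j \<and> j < i \<longrightarrow> at S i < at S j)"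
    using PP_lt[of S i] assms by auto
next
  assume h: "at S p \<le> at S i \<and> (\<forall>j. p < j \<and> j < i \<longrightarrow> at S i < at S j)"
  have "PP S i \<noteq> i" using PP_self_iff[of S i] h assms by fastforce
  then have lt: "PP S i < i" using PP_le[of S i] by simp
  note L = PP_lt[OF lt]
  show "PP S i = p"
  proof (rule ccontr)
    assume ne: "PP S i \<noteq> p"
    show False
    proof (cases "PP S i < p")
      case True then show ?thesis using L h assms by fastforce
    next
      case False then have "p < PP S i" using ne by simp
      then show ?thesis using L h lt by fastforce
    qed
  qed
qed

lemma preceq_antisym: "preceq S m k \<Longrightarrow> preceq S k m \<Longrightarrow> m = k"
  by (auto simp: preceq_def prec_def)

lemma minpos_unique:
  assumes "a \<le> m" "m \<le> b" "\<forall>k. a \<le> k \<and> k \<le> b \<longrightarrow> preceq S m k"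
  shows "minpos S a b = m"
  unfolding minpos_def
  by (rule the_equality) (use assms preceq_antisym in blast)+

lemma minpos_exists:
  assumes "a \<le> b"
  shows "\<exists>m. a \<le> m \<and> m \<le> b \<and> (\<forall>k. a \<le> k \<and> k \<le> b \<longrightarrow> preceq S m k)"
  using assms
proof (induction b rule: dec_induct)
  case base then show ?case by (auto simp: preceq_def)
next
  case (step n)
  then obtain m where m: "a \<le> m \<and> m \<le> n \<and> (\<forall>k. a \<le> k \<and> k \<le> n \<longrightarrow> preceq S m k)" by blast
  show ?case
  proof (cases "preceq S m (Suc n)")
    case True then show ?thesis using m by (metis le_Suc_eq le_SucI)
  next
    case False
    then have "at S (Suc n) < at S m \<or> (at S (Suc n) = at S m)" using m
      by (auto simp: preceq_def prec_def)
    then have lt: "at S (Suc n) < at S m" using False m by (auto simp: preceq_def prec_def)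
    have "\<forall>k. a \<le> k \<and> k \<le> Suc n \<longrightarrow> preceq S (Suc n) k"
    proof (intro allI impI)
      fix k assume k: "a \<le> k \<and> k \<le> Suc n"
      show "preceq S (Suc n) k"
      proof (cases "k = Suc n")
        case True then show ?thesis by (simp add: preceq_def)
      next
        case False
        then have "preceq S m k" using m k by simp
        then have "at S m \<le> at S k" by (auto simp: preceq_def prec_def)
        then show ?thesis using lt False k by (auto simp: preceq_def prec_def)
      qed
    qed
    then show ?thesis using step by (intro exI[of _ "Suc n"]) auto
  qed
qed

lemma minpos_prop:
  assumes "a \<le> b"
  shows "a \<le> minpos S a b \<and> minpos S a b \<le> b \<and> (\<forall>k. a \<le> k \<and> k \<le> b \<longrightarrow> preceq S (minpos S a b) k)"
proof -
  obtain m where m: "a \<le> m \<and> m \<le> b \<and> (\<forall>k. a \<le> k \<and> k \<le> b \<longrightarrow> preceq S m k)"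
    using minpos_exists[OF assms] by blast
  then have "minpos S a b = m" using minpos_unique by blast
  then show ?thesis using m by simp
qed

lemma min_below_iff:
  assumes "a \<le> b"
  shows "(\<forall>j. a \<le> j \<and> j \<le> b \<longrightarrow> x < at S j) \<longleftrightarrow> x < at S (minpos S a b)"
proof -
  note M = minpos_prop[OF assms, of S]
  have "\<And>j. a \<le> j \<and> j \<le> b \<Longrightarrow> at S (minpos S a b) \<le> at S j"
    using M by (auto simp: preceq_def prec_def)
  then show ?thesis using M by (meson order_less_le_trans)
qed

lemma recmin_iff:
  assumes "1 \<le> a" "a \<le> i"
  shows "(\<forall>j. a \<le> j \<and> j < i \<longrightarrow> at S i < at S j) \<longleftrightarrow> (PP S i < a \<or> PP S i = i)"
proof
  assume h: "\<forall>j. a \<le> j \<and> j < i \<longrightarrow> at S i < at S j"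
  show "PP S i < a \<or> PP S i = i"
  proof (rule ccontr)
    assume "\<not> (PP S i < a \<or> PP S i = i)"
    then have "a \<le> PP S i" "PP S i < i" using PP_le[of S i] by auto
    then show False using PP_lt[of S i] h by fastforce
  qed
next
  assume "PP S i < a \<or> PP S i = i"
  then show "\<forall>j. a \<le> j \<and> j < i \<longrightarrow> at S i < at S j"
  proof
    assume "PP S i < a"
    then have "PP S i < i" using assms by simp
    then show ?thesis using PP_lt[of S i] \<open>PP S i < a\<close> by fastforce
  next
    assume "PP S i = i" then show ?thesis using PP_self_iff[of S i] assms by auto
  qed
qed

lemma minpos_Suc:
  assumes "a \<le> b"
  shows "minpos S a (Suc b) = (if \<forall>j. a \<le> j \<and> j \<le> b \<longrightarrow> at S (Suc b) < at S j then Suc b else minpos S a b)"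
proof (cases "\<forall>j. a \<le> j \<and> j \<le> b \<longrightarrow> at S (Suc b) < at S j")
  case True
  have A: "\<forall>k. a \<le> k \<and> k \<le> Suc b \<longrightarrow> preceq S (Suc b) k"
  proof (intro allI impI)
    fix k assume k: "a \<le> k \<and> k \<le> Suc b"
    show "preceq S (Suc b) k"
    proof (cases "k = Suc b")
      case True then show ?thesis by (simp add: preceq_def)
    next
      case False
      then have "k \<le> b" "k < Suc b" using k by auto
      then show ?thesis using True k preceq_gt[of k "Suc b" S] by blast
    qed
  qed
  have "minpos S a (Suc b) = Suc b"
    by (rule minpos_unique) (use assms A in auto)
  then show ?thesis by (rule trans[OF _ if_P[OF True, symmetric]])
next
  case False
  note M = minpos_prop[OF assms, of S]
  have "\<not> at S (Suc b) < at S (minpos S a b)" using False min_below_iff[OF assms] by blast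
  then have P: "preceq S (minpos S a b) (Suc b)" using M by (auto simp: preceq_def prec_def)
  have A: "\<forall>k. a \<le> k \<and> k \<le> Suc b \<longrightarrow> preceq S (minpos S a b) k"
  proof (intro allI impI)
    fix k assume k: "a \<le> k \<and> k \<le> Suc b"
    show "preceq S (minpos S a b) k"
    proof (cases "k = Suc b")
      case True then show ?thesis using P by simp
    next
      case False
      then have "k \<le> b" using k by auto
      then show ?thesis using M k by blast
    qed
  qed
  have "minpos S a (Suc b) = minpos S a b"
    by (rule minpos_unique) (use M A in auto)
  then show ?thesis by (rule trans[OF _ if_not_P[OF False, symmetric]])
qed

lemma minpos_cong:
  assumes "1 \<le> a" "a \<le> b" "\<forall>i. a \<le> i \<and> i \<le> b \<longrightarrow> PP P i = PP S i"
  shows "minpos P a b = minpos S a b"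
  using assms(2,3)
proof (induction b rule: dec_induct)
  case base
  have "minpos P a a = a" "minpos S a a = a" by (auto intro!: minpos_unique simp: preceq_def)
  then show ?case by simp
next
  case (step n)
  have e: "PP P (Suc n) = PP S (Suc n)" using step by simp
  have ih: "minpos P a n = minpos S a n" using step by simp
  have "a \<le> Suc n" using step by simp
  have C: "(\<forall>j. a \<le> j \<and> j \<le> n \<longrightarrow> at P (Suc n) < at P j) \<longleftrightarrow> (\<forall>j. a \<le> j \<and> j \<le> n \<longrightarrow> at S (Suc n) < at S j)"
    using recmin_iff[OF assms(1) \<open>a \<le> Suc n\<close>, of P] recmin_iff[OF assms(1) \<open>a \<le> Suc n\<close>, of S] e
    by (simp add: less_Suc_eq_le)
  show ?case
  proof (cases "\<forall>j. a \<le> j \<and> j \<le> n \<longrightarrow> at S (Suc n) < at S j")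
    case True
    then have "\<forall>j. a \<le> j \<and> j \<le> n \<longrightarrow> at P (Suc n) < at P j" using C by blast
    then show ?thesis using True minpos_Suc[OF step(1), of P] minpos_Suc[OF step(1), of S] by presburger
  next
    case False
    then have PF: "\<not>(\<forall>j. a \<le> j \<and> j \<le> n \<longrightarrow> at P (Suc n) < at P j)" using C by blast
    have "minpos P a (Suc n) = minpos P a n"
      by (subst minpos_Suc[OF step(1)]) (simp only: if_not_P[OF PF])
    moreover have "minpos S a (Suc n) = minpos S a n"
      by (subst minpos_Suc[OF step(1)]) (simp only: if_not_P[OF False])
    ultimately show ?thesis using ih by simp
  qed
qed

theorem theorem1:
  fixes P S :: "'a::linorder list" and q :: nat
  assumes "length P \<ge> q + 1" and "length S \<ge> q + 1"
    and "\<forall>i. 1 \<le> i \<and> i \<le> q \<longrightarrow> PP (take q P) i = PP (take q S) i"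
  shows "(\<forall>i. 1 \<le> i \<and> i \<le> q + 1 \<longrightarrow> PP (take (q + 1) P) i = PP (take (q + 1) S) i)
         \<longleftrightarrow> (preceq S (PP P (q + 1)) (q + 1) \<and> preceq S (q + 1) (PC P (q + 1)))"
proof -
  have H: "\<forall>i. 1 \<le> i \<and> i \<le> q \<longrightarrow> PP P i = PP S i"
  proof (intro allI impI)
    fix i assume i: "1 \<le> i \<and> i \<le> q"
    have "PP (take q P) i = PP (take q S) i" using assms(3) i by blast
    then show "PP P i = PP S i" using PP_take[of i q P] PP_take[of i q S] i by simp
  qed
  have "(\<forall>i. 1 \<le> i \<and> i \<le> q + 1 \<longrightarrow> PP (take (q + 1) P) i = PP (take (q + 1) S) i)
        \<longleftrightarrow> PP P (q+1) = PP S (q+1)"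
  proof
    assume h: "\<forall>i. 1 \<le> i \<and> i \<le> q + 1 \<longrightarrow> PP (take (q + 1) P) i = PP (take (q + 1) S) i"
    have "PP (take (q + 1) P) (q+1) = PP (take (q + 1) S) (q+1)" using h by simp
    then show "PP P (q+1) = PP S (q+1)" using PP_take[of "q+1" "q+1" P] PP_take[of "q+1" "q+1" S] by simp
  next
    assume h: "PP P (q+1) = PP S (q+1)"
    show "\<forall>i. 1 \<le> i \<and> i \<le> q + 1 \<longrightarrow> PP (take (q + 1) P) i = PP (take (q + 1) S) i"
    proof (intro allI impI)
      fix i assume i: "1 \<le> i \<and> i \<le> q + 1"
      have "PP P i = PP S i"
      proof (cases "i = q+1")
        case True then show ?thesis using h by simp
      next
        case False then show ?thesis using H i by simp
      qed
      then show "PP (take (q + 1) P) i = PP (take (q + 1) S) i"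
        using PP_take[of i "q+1" P] PP_take[of i "q+1" S] i by simp
    qed
  qed
  moreover have "PP P (q+1) = PP S (q+1) \<longleftrightarrow>
     (preceq S (PP P (q + 1)) (q + 1) \<and> preceq S (q + 1) (PC P (q + 1)))"
  proof (cases "q = 0")
    case True
    have "PP P 1 = 1" "PP S 1 = 1" by (auto simp: PP_def)
    then show ?thesis using True by (simp add: PC_def preceq_def)
  next
    case q: False
    show ?thesis
    proof (cases "PP P (q+1) = q+1")
      case True
      have pc: "PC P (q+1) = minpos P 1 q" using True q by (simp add: PC_def)
      have mc: "minpos P 1 q = minpos S 1 q" using H q by (intro minpos_cong) auto
      have M: "1 \<le> minpos S 1 q \<and> minpos S 1 q \<le> q" using minpos_prop[of 1 q S] q by auto
      have "PP S (q+1) = q+1 \<longleftrightarrow> at S (q+1) < at S (minpos S 1 q)"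
        using PP_self_iff[of S "q+1"] min_below_iff[of 1 q "at S (q+1)" S] q
        by (simp add: less_Suc_eq_le)
      moreover have "preceq S (q+1) (minpos S 1 q) \<longleftrightarrow> at S (q+1) < at S (minpos S 1 q)"
        using M preceq_gt[of "minpos S 1 q" "q+1" S] by simp
      ultimately show ?thesis using True pc mc by (auto simp: preceq_def)
    next
      case False
      then have lt: "PP P (q+1) < q+1" using PP_le[of P "q+1"] by simp
      define p where "p = PP P (q+1)"
      have p1: "1 \<le> p" using PP_lt[OF lt] p_def by simp
      have pre: "preceq S p (q+1) \<longleftrightarrow> at S p \<le> at S (q+1)"
        using lt p_def prec_lt[of p "q+1" S] by (simp add: preceq_def)
      have eq: "PP S (q+1) = p \<longleftrightarrow> at S p \<le> at S (q+1) \<and> (\<forall>j. p < j \<and> j < q+1 \<longrightarrow> at S (q+1) < at S j)"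
        using PP_eq_iff[OF p1, of "q+1" S] lt p_def by simp
      show ?thesis
      proof (cases "p = q")
        case True
        have "PC P (q+1) = q+1" using True q p_def by (simp add: PC_def)
        then show ?thesis using eq pre True p_def by (auto simp: preceq_def)
      next
        case pq: False
        then have pq': "p + 1 \<le> q" using lt p_def by simp
        have pc: "PC P (q+1) = minpos P (p+1) q" using pq lt q p_def by (simp add: PC_def)
        have mc: "minpos P (p+1) q = minpos S (p+1) q" using H pq' p1 by (intro minpos_cong) auto
        have M: "minpos S (p+1) q \<le> q" using minpos_prop[OF pq', of S] by auto
        have "(\<forall>j. p < j \<and> j < q+1 \<longrightarrow> at S (q+1) < at S j) \<longleftrightarrow> at S (q+1) < at S (minpos S (p+1) q)"
          using min_below_iff[OF pq', of "at S (q+1)" S] by (auto simp: less_Suc_eq_le Suc_le_eq)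
        moreover have "preceq S (q+1) (minpos S (p+1) q) \<longleftrightarrow> at S (q+1) < at S (minpos S (p+1) q)"
          using M preceq_gt[of "minpos S (p+1) q" "q+1" S] by simp
        ultimately show ?thesis using eq pre pc mc p_def by auto
      qed
    qed
  qed
  ultimately show ?thesis by simp
qed

end
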